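(* Let $(\mathfrak{g}_\sigma,\mathfrak{q})$ be a reductive $CR$-algebra with invariant complement $\mathfrak{q}^c$. Then $\mathfrak{N}(\mathfrak{q},\mathfrak{q}^c)=\{Z\in\mathfrak{q}\mid[Z,\mathfrak{q}^c]\subseteq\mathfrak{q}^c\}$ is a Lie subalgebra of $\mathfrak{q}$ containing $\mathfrak{q}\cap\sigma(\mathfrak{q})$, and for every $Z\in\mathfrak{N}(\mathfrak{q},\mathfrak{q}^c)\setminus\sigma(\mathfrak{q})$ the Levi-order of $\sigma(Z)$ is either $1$ or $+\infty$.
   Context: $\mathfrak{g}$ is a finite-dimensional complex Lie algebra, $\sigma$ an anti-$\mathbb{C}$-linear involution, $\mathfrak{g}_\sigma$ its fixed points; $(\mathfrak{g}_\sigma,\mathfrak{q})$ with $\mathfrak{q}$ a complex subalgebra of $\mathfrak{g}$ is a $CR$-algebra. It is reductive if there is a $\mathbb{C}$-linear complement $\mathfrak{q}^c$ of $\mathfrak{q}$ in $\mathfrak{g}$ (an invariant complement) with $[\mathfrak{q}\cap\sigma(\mathfrak{q}),\mathfrak{q}^c]\subseteq\mathfrak{q}^c$ and $\mathfrak{g}=(\mathfrak{q}\cap\sigma(\mathfrak{q}))\oplus(\mathfrak{q}\cap\sigma(\mathfrak{q}^c))\oplus(\mathfrak{q}^c\cap\sigma(\mathfrak{q}))\oplus(\mathfrak{q}^c\cap\sigma(\mathfrak{q}^c))$. Higher order commutators: $[X_1,\dots,X_h]=[[X_1,\dots,X_{h-1}],X_h]$. For $W\in\sigma(\mathfrak{q})\setminus\mathfrak{q}$,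 its Levi-order is the least $k$ such that there exist $Z_1,\dots,Z_k\in\mathfrak{q}$ with $[W,Z_1,\dots,Z_k]\notin\mathfrak{q}+\sigma(\mathfrak{q})$, and $+\infty$ if no such $k$ exists. *)

theory Defs
  imports Complex_Main "HOL-Library.Extended_Nat"
begin

text \<open>The complex vector space structure on the carrier type 'a is given explicitly by
a scalar multiplication sc (complex scalars), since Main has no complex-vector class.\<close>

definition fin_dim_complex_space :: "(complex \<Rightarrow> 'a::ab_group_add \<Rightarrow> 'a) \<Rightarrow> bool" where
  "fin_dim_complex_space sc \<longleftrightarrow>
     vector_space sc \<and> (\<exists>B::'a set. finite B \<and> module.span sc B = UNIV)"

definition lie_algebra ::
  "(complex \<Rightarrow> 'a::ab_group_add \<Rightarrow> 'a) \<Rightarrow> ('a \<Rightarrow> 'a \<Rightarrow> 'a) \<Rightarrow> bool" where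
  "lie_algebra sc br \<longleftrightarrow>
     (\<forall>x y z. br (x + y) z = br x z + br y z) \<and>
     (\<forall>x y z. br x (y + z) = br x y + br x z) \<and>
     (\<forall>c x y. br (sc c x) y = sc c (br x y)) \<and>
     (\<forall>c x y. br x (sc c y) = sc c (br x y)) \<and>
     (\<forall>x. br x x = 0) \<and>
     (\<forall>x y z. br x (br y z) + br y (br z x) + br z (br x y) = 0)"

text \<open>Anti-C-linear involution of the Lie algebra (an involutive anti-linear Lie algebra
automorphism; its fixed points form the real form g_sigma).\<close>
definition anti_involution ::
  "(complex \<Rightarrow> 'a::ab_group_add \<Rightarrow> 'a) \<Rightarrow> ('a \<Rightarrow> 'a \<Rightarrow> 'a) \<Rightarrow> ('a \<Rightarrow> 'a) \<Rightarrow> bool" where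
  "anti_involution sc br \<sigma> \<longleftrightarrow>
     (\<forall>x y. \<sigma> (x + y) = \<sigma> x + \<sigma> y) \<and>
     (\<forall>c x. \<sigma> (sc c x) = sc (cnj c) (\<sigma> x)) \<and>
     (\<forall>x. \<sigma> (\<sigma> x) = x) \<and>
     (\<forall>x y. \<sigma> (br x y) = br (\<sigma> x) (\<sigma> y))"

definition lie_subalgebra ::
  "(complex \<Rightarrow> 'a::ab_group_add \<Rightarrow> 'a) \<Rightarrow> ('a \<Rightarrow> 'a \<Rightarrow> 'a) \<Rightarrow> 'a set \<Rightarrow> bool" where
  "lie_subalgebra sc br S \<longleftrightarrow> module.subspace sc S \<and> (\<forall>x\<in>S. \<forall>y\<in>S. br x y \<in> S)"

definition sum_set :: "('a::ab_group_add) set \<Rightarrow> 'a set \<Rightarrow> 'a set" where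
  "sum_set A B = {a + b | a b. a \<in> A \<and> b \<in> B}"

definition direct_sum4 :: "('a::ab_group_add) set \<Rightarrow> 'a set \<Rightarrow> 'a set \<Rightarrow> 'a set \<Rightarrow> bool" where
  "direct_sum4 A B C D \<longleftrightarrow>
     (\<forall>x. \<exists>!(a, b, c, d). a \<in> A \<and> b \<in> B \<and> c \<in> C \<and> d \<in> D \<and> x = a + b + c + d)"

definition invariant_complement ::
  "(complex \<Rightarrow> 'a::ab_group_add \<Rightarrow> 'a) \<Rightarrow> ('a \<Rightarrow> 'a \<Rightarrow> 'a) \<Rightarrow> ('a \<Rightarrow> 'a) \<Rightarrow>
     'a set \<Rightarrow> 'a set \<Rightarrow> bool" where
  "invariant_complement sc br \<sigma> q qc \<longleftrightarrow>
     module.subspace sc qc \<and> q \<inter> qc = {0} \<and> sum_set q qc = UNIV \<and>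
     (\<forall>x\<in>q \<inter> \<sigma> ` q. \<forall>y\<in>qc. br x y \<in> qc) \<and>
     direct_sum4 (q \<inter> \<sigma> ` q) (q \<inter> \<sigma> ` qc) (qc \<inter> \<sigma> ` q) (qc \<inter> \<sigma> ` qc)"

text \<open>Higher order commutator: iter_br br W Z k = [W, Z 0, ..., Z (k-1)],
with [X_1,...,X_h] = [[X_1,...,X_(h-1)],X_h].\<close>
fun iter_br :: "('a \<Rightarrow> 'a \<Rightarrow> 'a) \<Rightarrow> 'a \<Rightarrow> (nat \<Rightarrow> 'a) \<Rightarrow> nat \<Rightarrow> 'a" where
  "iter_br br W Z 0 = W"
| "iter_br br W Z (Suc k) = br (iter_br br W Z k) (Z k)"

definition levi_witness ::
  "('a::ab_group_add \<Rightarrow> 'a \<Rightarrow> 'a) \<Rightarrow> ('a \<Rightarrow> 'a) \<Rightarrow> 'a set \<Rightarrow> 'a \<Rightarrow> nat \<Rightarrow> bool" where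
  "levi_witness br \<sigma> q W k \<longleftrightarrow>
     (\<exists>Z. (\<forall>i<k. Z i \<in> q) \<and> iter_br br W Z k \<notin> sum_set q (\<sigma> ` q))"

text \<open>Levi-order of W (for W in sigma(q) minus q): least k admitting a witness, else infinity.\<close>
definition levi_order ::
  "('a::ab_group_add \<Rightarrow> 'a \<Rightarrow> 'a) \<Rightarrow> ('a \<Rightarrow> 'a) \<Rightarrow> 'a set \<Rightarrow> 'a \<Rightarrow> enat" where
  "levi_order br \<sigma> q W =
     (if \<exists>k. levi_witness br \<sigma> q W k
      then enat (LEAST k. levi_witness br \<sigma> q W k) else \<infinity>)"

definition normalizer_compl :: "('a \<Rightarrow> 'a \<Rightarrow> 'a) \<Rightarrow> 'a set \<Rightarrow> 'a set \<Rightarrow> 'a set" where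
  "normalizer_compl br q qc = {Z \<in> q. \<forall>Y\<in>qc. br Z Y \<in> qc}"

end

theory Submission
  imports Defs
begin

locale CRalg = vector_space sc for sc :: "complex \<Rightarrow> 'a::ab_group_add \<Rightarrow> 'a" +
  fixes br :: "'a \<Rightarrow> 'a \<Rightarrow> 'a" and \<sigma> :: "'a \<Rightarrow> 'a" and q qc :: "'a set"
  assumes lie: "lie_algebra sc br"
    and inv: "anti_involution sc br \<sigma>"
    and sub: "lie_subalgebra sc br q"
    and ic: "invariant_complement sc br \<sigma> q qc"
begin

lemma br_addl: "br (x + y) z = br x z + br y z" using lie unfolding lie_algebra_def by blast
lemma br_addr: "br x (y + z) = br x y + br x z" using lie unfolding lie_algebra_def by blast
lemma br_scl: "br (sc c x) y = sc c (br x y)" using lie unfolding lie_algebra_def by blast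
lemma br_alt: "br x x = 0" using lie unfolding lie_algebra_def by blast
lemma br_jac: "br x (br y z) + br y (br z x) + br z (br x y) = 0" using lie unfolding lie_algebra_def by blast

lemma br_0l: "br 0 y = 0" using br_addl[of 0 0 y] by simp
lemma br_0r: "br y 0 = 0" using br_addr[of y 0 0] by simp
lemma br_negl: "br (- x) y = - br x y" using br_addl[of x "-x" y] br_0l by (simp add: eq_neg_iff_add_eq_0 add.commute)
lemma br_negr: "br y (- x) = - br y x" using br_addr[of y x "-x"] br_0r by (simp add: eq_neg_iff_add_eq_0 add.commute)
lemma br_diffl: "br (x - y) z = br x z - br y z" by (simp only: diff_conv_add_uminus br_addl br_negl)
lemma br_diffr: "br z (x - y) = br z x - br z y" by (simp only: diff_conv_add_uminus br_addr br_negr)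
lemma br_anti: "br x y = - br y x"
proof -
  have "br (x+y) (x+y) = br x y + br y x" by (simp only: br_addl br_addr) (simp add: br_alt)
  then have "br x y + br y x = 0" using br_alt[of "x+y"] by simp
  then show ?thesis by (simp add: eq_neg_iff_add_eq_0)
qed

lemma jac2: "br (br Y a) b = br Y (br a b) - br a (br Y b)"
proof -
  have j: "br b (br Y a) + br Y (br a b) + br a (br b Y) = 0" by (rule br_jac)
  have 1: "br b (br Y a) = - br (br Y a) b" using br_anti by blast
  have 2: "br a (br b Y) = - br a (br Y b)" by (subst br_anti[of b Y], rule br_negr)
  have "(br Y (br a b) - br a (br Y b)) - br (br Y a) b = br b (br Y a) + br Y (br a b) + br a (br b Y)"
    unfolding 1 2 by (simp only: diff_conv_add_uminus ac_simps)
  then have "(br Y (br a b) - br a (br Y b)) - br (br Y a) b = 0" using j by simp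
  then show ?thesis by (simp only: right_minus_eq)
qed

lemma s_add: "\<sigma> (x + y) = \<sigma> x + \<sigma> y" using inv unfolding anti_involution_def by blast
lemma s_inv: "\<sigma> (\<sigma> x) = x" using inv unfolding anti_involution_def by blast
lemma s_br: "\<sigma> (br x y) = br (\<sigma> x) (\<sigma> y)" using inv unfolding anti_involution_def by blast
lemma s_0: "\<sigma> 0 = 0" using s_add[of 0 0] by simp
lemma s_neg: "\<sigma> (- x) = - \<sigma> x" using s_add[of x "-x"] s_0 by (simp add: eq_neg_iff_add_eq_0 add.commute)
lemma s_diff: "\<sigma> (x - y) = \<sigma> x - \<sigma> y" by (simp only: diff_conv_add_uminus s_add s_neg)
lemma s_inj: "\<sigma> x = \<sigma> y \<Longrightarrow> x = y" by (metis s_inv)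

lemma q_sub: "subspace q" using sub unfolding lie_subalgebra_def by blast
lemma q_br: "x \<in> q \<Longrightarrow> y \<in> q \<Longrightarrow> br x y \<in> q" using sub unfolding lie_subalgebra_def by blast
lemma qc_sub: "subspace qc" using ic unfolding invariant_complement_def by blast
lemma qqc: "q \<inter> qc = {0}" using ic unfolding invariant_complement_def by blast
lemma ic_inv: "x \<in> q \<inter> \<sigma> ` q \<Longrightarrow> y \<in> qc \<Longrightarrow> br x y \<in> qc" using ic unfolding invariant_complement_def by blast
lemma ds4: "direct_sum4 (q \<inter> \<sigma> ` q) (q \<inter> \<sigma> ` qc) (qc \<inter> \<sigma> ` q) (qc \<inter> \<sigma> ` qc)"
  using ic unfolding invariant_complement_def by blast

lemma img_0: "subspace S \<Longrightarrow> 0 \<in> \<sigma> ` S" using s_0 subspace_0 by (metis image_eqI)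
lemma img_add: "subspace S \<Longrightarrow> x \<in> \<sigma> ` S \<Longrightarrow> y \<in> \<sigma> ` S \<Longrightarrow> x + y \<in> \<sigma> ` S"
proof -
  assume S: "subspace S" and "x \<in> \<sigma> ` S" "y \<in> \<sigma> ` S"
  then obtain u v where "u \<in> S" "v \<in> S" "x = \<sigma> u" "y = \<sigma> v" by blast
  then have "x + y = \<sigma> (u + v)" "u + v \<in> S" using S by (simp_all add: s_add subspace_add)
  then show ?thesis by blast
qed
lemma img_diff: "subspace S \<Longrightarrow> x \<in> \<sigma> ` S \<Longrightarrow> y \<in> \<sigma> ` S \<Longrightarrow> x - y \<in> \<sigma> ` S"
proof -
  assume S: "subspace S" and "x \<in> \<sigma> ` S" "y \<in> \<sigma> ` S"
  then obtain u v where "u \<in> S" "v \<in> S" "x = \<sigma> u" "y = \<sigma> v" by blast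
  then have "x - y = \<sigma> (u - v)" "u - v \<in> S" using S by (simp_all add: s_diff subspace_diff)
  then show ?thesis by blast
qed

lemma sq_sqc: "x \<in> \<sigma> ` q \<Longrightarrow> x \<in> \<sigma> ` qc \<Longrightarrow> x = 0"
proof -
  assume "x \<in> \<sigma> ` q" "x \<in> \<sigma> ` qc"
  then obtain u v where u: "u \<in> q" "x = \<sigma> u" and v: "v \<in> qc" "x = \<sigma> v" by blast
  then have "u = v" using s_inj by metis
  then have "u \<in> q \<inter> qc" using u v by simp
  then have "u = 0" using qqc by blast
  then show "x = 0" using u s_0 by simp
qed

abbreviation "A \<equiv> q \<inter> \<sigma> ` q"
abbreviation "B \<equiv> q \<inter> \<sigma> ` qc"
abbreviation "C \<equiv> qc \<inter> \<sigma> ` q"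
abbreviation "D \<equiv> qc \<inter> \<sigma> ` qc"

lemma ex1_two: "\<exists>!x. P x \<Longrightarrow> P a \<Longrightarrow> P b \<Longrightarrow> a = b" by blast

lemma decomp:
  obtains a b c d where "a \<in> A" "b \<in> B" "c \<in> C" "d \<in> D" "x = a + b + c + d"
proof -
  have "\<exists>t. case t of (a, b, c, d) \<Rightarrow> a \<in> A \<and> b \<in> B \<and> c \<in> C \<and> d \<in> D \<and> x = a + b + c + d"
    by (rule ex1_implies_ex, rule ds4[unfolded direct_sum4_def, rule_format])
  then obtain t where t: "case t of (a, b, c, d) \<Rightarrow> a \<in> A \<and> b \<in> B \<and> c \<in> C \<and> d \<in> D \<and> x = a + b + c + d" ..
  obtain a b c d where "t = (a, b, c, d)" by (cases t) auto
  with t have "a \<in> A \<and> b \<in> B \<and> c \<in> C \<and> d \<in> D \<and> x = a + b + c + d" by simp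
  then show ?thesis using that by (elim conjE)
qed

lemma uniq: "a \<in> A \<Longrightarrow> b \<in> B \<Longrightarrow> c \<in> C \<Longrightarrow> d \<in> D \<Longrightarrow>
  a' \<in> A \<Longrightarrow> b' \<in> B \<Longrightarrow> c' \<in> C \<Longrightarrow> d' \<in> D \<Longrightarrow> a + b + c + d = a' + b' + c' + d' \<Longrightarrow>
  a = a' \<and> b = b' \<and> c = c' \<and> d = d'"
proof -
  assume h: "a \<in> A" "b \<in> B" "c \<in> C" "d \<in> D" "a' \<in> A" "b' \<in> B" "c' \<in> C" "d' \<in> D"
    "a + b + c + d = a' + b' + c' + d'"
  have E: "\<exists>!t. case t of (x, y, z, w) \<Rightarrow> x \<in> A \<and> y \<in> B \<and> z \<in> C \<and> w \<in> D \<and> a + b + c + d = x + y + z + w"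
    by (rule ds4[unfolded direct_sum4_def, rule_format])
  have "(a,b,c,d) = (a',b',c',d')"
    by (rule ex1_two[OF E]) (use h in simp_all)
  then show ?thesis by simp
qed

lemma q0: "0 \<in> q" using q_sub subspace_0 by blast
lemma qc0: "0 \<in> qc" using qc_sub subspace_0 by blast
lemma sq0: "0 \<in> \<sigma> ` q" using q_sub img_0 by blast
lemma sqc0: "0 \<in> \<sigma> ` qc" using qc_sub img_0 by blast
lemma q_add: "x \<in> q \<Longrightarrow> y \<in> q \<Longrightarrow> x + y \<in> q" using q_sub subspace_add by blast
lemma q_diff: "x \<in> q \<Longrightarrow> y \<in> q \<Longrightarrow> x - y \<in> q" using q_sub subspace_diff by blast
lemma qc_add: "x \<in> qc \<Longrightarrow> y \<in> qc \<Longrightarrow> x + y \<in> qc" using qc_sub subspace_add by blast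
lemma qc_diff: "x \<in> qc \<Longrightarrow> y \<in> qc \<Longrightarrow> x - y \<in> qc" using qc_sub subspace_diff by blast
lemma sq_add: "x \<in> \<sigma> ` q \<Longrightarrow> y \<in> \<sigma> ` q \<Longrightarrow> x + y \<in> \<sigma> ` q" using q_sub img_add by blast
lemma sq_diff: "x \<in> \<sigma> ` q \<Longrightarrow> y \<in> \<sigma> ` q \<Longrightarrow> x - y \<in> \<sigma> ` q" using q_sub img_diff by blast
lemma sqc_add: "x \<in> \<sigma> ` qc \<Longrightarrow> y \<in> \<sigma> ` qc \<Longrightarrow> x + y \<in> \<sigma> ` qc" using qc_sub img_add by blast
lemma sqc_diff: "x \<in> \<sigma> ` qc \<Longrightarrow> y \<in> \<sigma> ` qc \<Longrightarrow> x - y \<in> \<sigma> ` qc" using qc_sub img_diff by blast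

lemma decomp_q: "x \<in> q \<Longrightarrow> \<exists>a\<in>A. \<exists>b\<in>B. x = a + b"
proof -
  assume x: "x \<in> q"
  obtain a b c d where h: "a \<in> A" "b \<in> B" "c \<in> C" "d \<in> D" "x = a + b + c + d" by (rule decomp)
  have ab: "a + b \<in> q" using h q_add by blast
  have cd: "c + d \<in> qc" using h qc_add by blast
  have e: "c + d = x - (a + b)" using h(5) by (simp add: algebra_simps)
  have "c + d \<in> q" unfolding e using x ab q_diff by blast
  then have "c + d = 0" using cd qqc by blast
  then have "x = a + b" using h(5) by (simp add: add.assoc)
  then show ?thesis using h by blast
qed

lemma decomp_sq: "x \<in> \<sigma> ` q \<Longrightarrow> \<exists>a\<in>A. \<exists>c\<in>C. x = a + c"
proof -
  assume x: "x \<in> \<sigma> ` q"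
  obtain a b c d where h: "a \<in> A" "b \<in> B" "c \<in> C" "d \<in> D" "x = a + b + c + d" by (rule decomp)
  have ac: "a + c \<in> \<sigma> ` q" using h sq_add by blast
  have bd: "b + d \<in> \<sigma> ` qc" using h sqc_add by blast
  have e: "b + d = x - (a + c)" using h(5) by (simp add: algebra_simps)
  have "b + d \<in> \<sigma> ` q" unfolding e using x ac sq_diff by blast
  then have "b + d = 0" using bd sq_sqc by blast
  then have "x = a + c" using h(5) by (simp add: algebra_simps)
  then show ?thesis using h by blast
qed

lemma decomp_sqc: "x \<in> \<sigma> ` qc \<Longrightarrow> \<exists>b\<in>B. \<exists>d\<in>D. x = b + d"
proof -
  assume x: "x \<in> \<sigma> ` qc"
  obtain a b c d where h: "a \<in> A" "b \<in> B" "c \<in> C" "d \<in> D" "x = a + b + c + d" by (rule decomp)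
  have ac: "a + c \<in> \<sigma> ` q" using h sq_add by blast
  have bd: "b + d \<in> \<sigma> ` qc" using h sqc_add by blast
  have e: "a + c = x - (b + d)" using h(5) by (simp add: algebra_simps)
  have "a + c \<in> \<sigma> ` qc" unfolding e using x bd sqc_diff by blast
  then have "a + c = 0" using ac sq_sqc by blast
  then have "x = b + d" using h(5) by (simp add: algebra_simps)
  then show ?thesis using h by blast
qed

lemma in_B: "x \<in> \<sigma> ` qc \<Longrightarrow> x \<in> sum_set q (\<sigma> ` q) \<Longrightarrow> x \<in> B"
proof -
  assume x1: "x \<in> \<sigma> ` qc" and x2: "x \<in> sum_set q (\<sigma> ` q)"
  obtain b d where bd: "b \<in> B" "d \<in> D" "x = b + d" using decomp_sqc[OF x1] by blast
  obtain p s where ps: "p \<in> q" "s \<in> \<sigma> ` q" "x = p + s" using x2 unfolding sum_set_def by blast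
  obtain a1 b1 where ab1: "a1 \<in> A" "b1 \<in> B" "p = a1 + b1" using decomp_q[OF ps(1)] by blast
  obtain a2 c2 where ac2: "a2 \<in> A" "c2 \<in> C" "s = a2 + c2" using decomp_sq[OF ps(2)] by blast
  have A12: "a1 + a2 \<in> A" using ab1 ac2 q_add sq_add by blast
  have "(a1 + a2) + b1 + c2 + 0 = 0 + b + 0 + d"
    using bd(3) ps(3) ab1(3) ac2(3) by (simp add: ac_simps)
  moreover have D0: "0 \<in> D" and A0: "0 \<in> A" and C0: "0 \<in> C" by (simp_all add: q0 qc0 sq0 sqc0)
  ultimately have "a1 + a2 = 0 \<and> b1 = b \<and> c2 = 0 \<and> 0 = d"
    using uniq[OF A12 ab1(2) ac2(2) D0 A0 bd(1) C0 bd(2)] by blast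
  then show ?thesis using bd by simp
qed

abbreviation "N \<equiv> normalizer_compl br q qc"

lemma N_iff: "Z \<in> N \<longleftrightarrow> Z \<in> q \<and> (\<forall>Y\<in>qc. br Z Y \<in> qc)"
  unfolding normalizer_compl_def by blast

lemma N_subspace: "subspace N"
proof (unfold subspace_def, intro conjI ballI allI)
  show "0 \<in> N" unfolding N_iff using q0 br_0l qc0 by simp
next
  fix x y assume "x \<in> N" "y \<in> N"
  then show "x + y \<in> N" unfolding N_iff using q_add qc_add br_addl by simp
next
  fix c x assume "x \<in> N"
  then show "sc c x \<in> N" unfolding N_iff
    using subspace_scale[OF q_sub] subspace_scale[OF qc_sub] br_scl by simp
qed

lemma N_br: "Z1 \<in> N \<Longrightarrow> Z2 \<in> N \<Longrightarrow> br Z1 Z2 \<in> N"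
  unfolding N_iff using q_br jac2 qc_diff by simp

lemma A_N: "x \<in> A \<Longrightarrow> x \<in> N"
  unfolding N_iff using ic_inv by blast

lemma N_q: "x \<in> N \<Longrightarrow> x \<in> q" unfolding N_iff by blast

lemma sA: "a \<in> A \<Longrightarrow> \<sigma> a \<in> A"
proof -
  assume a: "a \<in> A"
  then obtain u where u: "u \<in> q" "a = \<sigma> u" by blast
  then have "\<sigma> a = u" using s_inv by simp
  then show ?thesis using a u by blast
qed

lemma AB: "a \<in> A \<Longrightarrow> b \<in> B \<Longrightarrow> br a b \<in> B"
proof -
  assume a: "a \<in> A" and b: "b \<in> B"
  then have 1: "br a b \<in> q" using q_br by blast
  from b obtain v where v: "v \<in> qc" "b = \<sigma> v" by blast
  have "\<sigma> a \<in> N" using sA[OF a] A_N by blast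
  then have 2: "br (\<sigma> a) v \<in> qc" using v N_iff by blast
  have "br a b = \<sigma> (br (\<sigma> a) v)" using v s_br s_inv by simp
  then show ?thesis using 1 2 by blast
qed

lemma sN_A: "Y \<in> \<sigma> ` N \<Longrightarrow> a \<in> A \<Longrightarrow> br Y a \<in> \<sigma> ` N"
proof -
  assume Y: "Y \<in> \<sigma> ` N" and a: "a \<in> A"
  then obtain Z where Z: "Z \<in> N" "Y = \<sigma> Z" by blast
  have "br Z (\<sigma> a) \<in> N" using N_br Z(1) A_N sA a by blast
  moreover have "br Y a = \<sigma> (br Z (\<sigma> a))" using Z s_br s_inv by simp
  ultimately show ?thesis by blast
qed

lemma sN_sqc: "Y \<in> \<sigma> ` N \<Longrightarrow> x \<in> \<sigma> ` qc \<Longrightarrow> br Y x \<in> \<sigma> ` qc"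
proof -
  assume Y: "Y \<in> \<sigma> ` N" and x: "x \<in> \<sigma> ` qc"
  then obtain Z v where Z: "Z \<in> N" "Y = \<sigma> Z" "v \<in> qc" "x = \<sigma> v" by blast
  have "br Z v \<in> qc" using Z N_iff by blast
  moreover have "br Y x = \<sigma> (br Z v)" using Z s_br by simp
  ultimately show ?thesis by blast
qed

definition M where "M = {Y \<in> \<sigma> ` N. \<forall>b\<in>B. br Y b \<in> q}"

lemma MB: "Y \<in> M \<Longrightarrow> b \<in> B \<Longrightarrow> br Y b \<in> B"
  unfolding M_def using sN_sqc by blast

lemma MA: "Y \<in> M \<Longrightarrow> a \<in> A \<Longrightarrow> br Y a \<in> M"
proof -
  assume Y: "Y \<in> M" and a: "a \<in> A"
  have "br (br Y a) b \<in> q" if b: "b \<in> B" for b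
  proof -
    have "br Y (br a b) \<in> q" using Y AB[OF a b] unfolding M_def by blast
    moreover have "br a (br Y b) \<in> q" using AB[OF a MB[OF Y b]] by blast
    ultimately show ?thesis using jac2 q_diff by simp
  qed
  moreover have "br Y a \<in> \<sigma> ` N" using Y a sN_A unfolding M_def by blast
  ultimately show ?thesis unfolding M_def by blast
qed

lemma M_sq: "Y \<in> M \<Longrightarrow> Y \<in> \<sigma> ` q"
  unfolding M_def using N_q by blast

lemma W_M:
  assumes Z: "Z \<in> N" and h: "\<forall>z\<in>q. br (\<sigma> Z) z \<in> sum_set q (\<sigma> ` q)"
  shows "\<sigma> Z \<in> M"
proof -
  have "br (\<sigma> Z) b \<in> q" if b: "b \<in> B" for b
  proof -
    have "br (\<sigma> Z) b \<in> \<sigma> ` qc" using sN_sqc Z b by blast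
    moreover have "br (\<sigma> Z) b \<in> sum_set q (\<sigma> ` q)" using h b by blast
    ultimately show ?thesis using in_B by blast
  qed
  then show ?thesis unfolding M_def using Z by blast
qed

lemma inv_step: "X \<in> sum_set M q \<Longrightarrow> z \<in> q \<Longrightarrow> br X z \<in> sum_set M q"
proof -
  assume X: "X \<in> sum_set M q" and z: "z \<in> q"
  obtain Y v where Yv: "Y \<in> M" "v \<in> q" "X = Y + v" using X unfolding sum_set_def by blast
  obtain a b where ab: "a \<in> A" "b \<in> B" "z = a + b" using decomp_q[OF z] by blast
  have e: "br X z = br Y a + (br Y b + br v z)"
    using Yv(3) ab(3) by (simp add: br_addl br_addr add.assoc)
  have "br Y a \<in> M" using MA Yv ab by blast
  moreover have "br Y b + br v z \<in> q" using MB[OF Yv(1) ab(2)] q_br[OF Yv(2) z] q_add by blast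
  ultimately show ?thesis unfolding e sum_set_def by blast
qed

lemma iter_inv: "W \<in> M \<Longrightarrow> (\<forall>i<k. Zs i \<in> q) \<Longrightarrow> iter_br br W Zs k \<in> sum_set M q"
proof (induction k)
  case 0
  have "iter_br br W Zs 0 = W + 0" by simp
  then show ?case using 0 q0 unfolding sum_set_def by blast
next
  case (Suc k)
  then have "iter_br br W Zs k \<in> sum_set M q" by simp
  moreover have "Zs k \<in> q" using Suc.prems by simp
  ultimately show ?case using inv_step by simp
qed

lemma sumM: "x \<in> sum_set M q \<Longrightarrow> x \<in> sum_set q (\<sigma> ` q)"
  unfolding sum_set_def using M_sq by (fastforce simp: add.commute)

lemma levi:
  assumes Z: "Z \<in> N"
  shows "levi_order br \<sigma> q (\<sigma> Z) = 1 \<or> levi_order br \<sigma> q (\<sigma> Z) = \<infinity>"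
proof (cases "\<exists>k. levi_witness br \<sigma> q (\<sigma> Z) k")
  case False
  have "levi_order br \<sigma> q (\<sigma> Z) = \<infinity>" unfolding levi_order_def by (subst if_not_P[OF False]) simp
  then show ?thesis by simp
next
  case True
  have not0: "\<not> levi_witness br \<sigma> q (\<sigma> Z) 0"
  proof -
    have "\<sigma> Z \<in> \<sigma> ` q" using Z N_q by blast
    then have "\<sigma> Z \<in> sum_set q (\<sigma> ` q)" unfolding sum_set_def using q0 by force
    then show ?thesis unfolding levi_witness_def by simp
  qed
  have w1: "levi_witness br \<sigma> q (\<sigma> Z) 1"
  proof (rule ccontr)
    assume n1: "\<not> levi_witness br \<sigma> q (\<sigma> Z) 1"
    have "\<forall>z\<in>q. br (\<sigma> Z) z \<in> sum_set q (\<sigma> ` q)"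
    proof
      fix z assume z: "z \<in> q"
      have "\<not> ((\<forall>i<1. (\<lambda>_. z) i \<in> q) \<and> iter_br br (\<sigma> Z) (\<lambda>_. z) 1 \<notin> sum_set q (\<sigma> ` q))"
        using n1 unfolding levi_witness_def by (rule contrapos_nn) (rule exI[where x="\<lambda>_. z"], simp add: z)
      then show "br (\<sigma> Z) z \<in> sum_set q (\<sigma> ` q)" using z by simp
    qed
    then have WM: "\<sigma> Z \<in> M" using W_M Z by blast
    from True obtain k where "levi_witness br \<sigma> q (\<sigma> Z) k" by blast
    then obtain Zs where "\<forall>i<k. Zs i \<in> q" "iter_br br (\<sigma> Z) Zs k \<notin> sum_set q (\<sigma> ` q)"
      unfolding levi_witness_def by blast
    then show False using iter_inv[OF WM] sumM by blast
  qed
  have "(LEAST k. levi_witness br \<sigma> q (\<sigma> Z) k) = 1"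
  proof (rule Least_equality)
    show "levi_witness br \<sigma> q (\<sigma> Z) 1" by (rule w1)
  next
    fix y assume "levi_witness br \<sigma> q (\<sigma> Z) y"
    then have "y \<noteq> 0" using not0 by (cases y) simp_all
    then show "1 \<le> y" by simp
  qed
  then show ?thesis using True unfolding levi_order_def by (simp add: one_enat_def)
qed

lemma main:
  "lie_subalgebra sc br N \<and> N \<subseteq> q \<and> q \<inter> \<sigma> ` q \<subseteq> N
    \<and> (\<forall>Z \<in> N - \<sigma> ` q. levi_order br \<sigma> q (\<sigma> Z) = 1 \<or> levi_order br \<sigma> q (\<sigma> Z) = \<infinity>)"
proof (intro conjI)
  show "lie_subalgebra sc br N" unfolding lie_subalgebra_def using N_subspace N_br by blast
  show "N \<subseteq> q" using N_q by blast
  show "q \<inter> \<sigma> ` q \<subseteq> N" using A_N by blast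
  show "\<forall>Z \<in> N - \<sigma> ` q. levi_order br \<sigma> q (\<sigma> Z) = 1 \<or> levi_order br \<sigma> q (\<sigma> Z) = \<infinity>"
  proof
    fix Z assume "Z \<in> N - \<sigma> ` q"
    then have "Z \<in> N" by blast
    then show "levi_order br \<sigma> q (\<sigma> Z) = 1 \<or> levi_order br \<sigma> q (\<sigma> Z) = \<infinity>" by (rule levi)
  qed
qed

end

theorem mainTheorem5:
  fixes sc :: "complex \<Rightarrow> 'a::ab_group_add \<Rightarrow> 'a"
    and br :: "'a \<Rightarrow> 'a \<Rightarrow> 'a"
    and \<sigma> :: "'a \<Rightarrow> 'a"
    and q qc :: "'a set"
  assumes "fin_dim_complex_space sc"
    and "lie_algebra sc br"
    and "anti_involution sc br \<sigma>"
    and "lie_subalgebra sc br q"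
    and "invariant_complement sc br \<sigma> q qc"
  shows "lie_subalgebra sc br (normalizer_compl br q qc)
    \<and> normalizer_compl br q qc \<subseteq> q
    \<and> q \<inter> \<sigma> ` q \<subseteq> normalizer_compl br q qc
    \<and> (\<forall>Z \<in> normalizer_compl br q qc - \<sigma> ` q.
          levi_order br \<sigma> q (\<sigma> Z) = 1 \<or> levi_order br \<sigma> q (\<sigma> Z) = \<infinity>)"
proof -
  have "vector_space sc" using assms(1) unfolding fin_dim_complex_space_def by blast
  then interpret CRalg sc br \<sigma> q qc
    by (rule CRalg.intro) (unfold_locales; fact assms)+
  show ?thesis by (rule main)
qed

end
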